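(* Let $p\in(0,1)$. Then $L^\infty(\mathbb R^n)\cap\mathcal L^{\Phi_p}(\mathbb R^n)=L^\infty(\mathbb R^n)\cap\mathcal L^{\Phi_p}_{\rm loc}(\mathbb R^n)$; equivalently, $L^\infty(\mathbb R^n)\cap(H^{\Phi_p}(\mathbb R^n))^*=L^\infty(\mathbb R^n)\cap(h^{\Phi_p}(\mathbb R^n))^*$.
   Context: $\Phi_p(\tau):=\tau/(1+\tau^{1-p})$; $\|f\|_{L^{\Phi_p}}:=\inf\{\lambda>0:\int\Phi_p(|f|/\lambda)\le1\}$; $d:=\lfloor n(1/p-1)\rfloor$. For $g\in L^1_{\rm loc}$ and a ball $B$, $P_B^dg$ is the unique polynomial $P$ of degree $\le d$ with $\int_B(g-P)R=0$ for all polynomials $R$ of degree $\le d$. The Orlicz Campanato space $\mathcal L^{\Phi_p}(\mathbb R^n)$ is the set of $g\in L^1_{\rm loc}$ with $\sup_{B}\|\mathbf 1_B\|_{L^{\Phi_p}}^{-1}\int_B|g-P_B^dg|<\infty$ (sup over all balls); it is the dual of the Orlicz Hardy space $H^{\Phi_p}(\mathbb R^n)$. The local Orlicz Campanato space $\mathcal L^{\Phi_p}_{\rm loc}(\mathbb R^n)$ is the set of $g\in L^1_{\rm loc}$ with $\sup_{|B|<1}\|\mathbf 1_B\|_{L^{\Phi_p}}^{-1}\int_B|g-P_B^dg|+\sup_{|B|\ge1}\|\mathbf 1_B\|_{L^{\Phi_p}}^{-1}\int_B|g|<\infty$; it is the dual of the local Orlicz Hardy space $h^{\Phi_p}(\mathbb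 R^n)$. *)

theory Defs
  imports "HOL-Analysis.Analysis"
begin

definition Phi :: "real \<Rightarrow> real \<Rightarrow> real" where
  "Phi p \<tau> = \<tau> / (1 + \<tau> powr (1 - p))"

definition orlicz_norm :: "real \<Rightarrow> ('a::euclidean_space \<Rightarrow> real) \<Rightarrow> real" where
  "orlicz_norm p f =
     Inf {l::real. l > 0 \<and> (\<integral>\<^sup>+ x. ennreal (Phi p (\<bar>f x\<bar> / l)) \<partial>lborel) \<le> 1}"

definition deg_p :: "real \<Rightarrow> nat \<Rightarrow> nat" where
  "deg_p p n = nat \<lfloor>real n * (1 / p - 1)\<rfloor>"

definition multi_indices :: "nat \<Rightarrow> ('a::euclidean_space \<Rightarrow> nat) set" where
  "multi_indices d = {\<alpha>. (\<forall>b. b \<notin> Basis \<longrightarrow> \<alpha> b = 0) \<and> (\<Sum>b\<in>Basis. \<alpha> b) \<le> d}"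

definition polys :: "nat \<Rightarrow> ('a::euclidean_space \<Rightarrow> real) set" where
  "polys d = {P. \<exists>c. P = (\<lambda>x. \<Sum>\<alpha>\<in>multi_indices d. c \<alpha> * (\<Prod>b\<in>Basis. (x \<bullet> b) ^ \<alpha> b))}"

definition poly_proj :: "nat \<Rightarrow> 'a::euclidean_space set \<Rightarrow> ('a \<Rightarrow> real) \<Rightarrow> ('a \<Rightarrow> real)" where
  "poly_proj d B g = (THE P. P \<in> polys d \<and>
      (\<forall>R\<in>polys d. (LINT x:B|lborel. (g x - P x) * R x) = 0))"

definition locally_integrable :: "('a::euclidean_space \<Rightarrow> real) \<Rightarrow> bool" where
  "locally_integrable g \<longleftrightarrow> g \<in> borel_measurable lborel \<and>
      (\<forall>K. compact K \<longrightarrow> set_integrable lborel K g)"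

definition essentially_bounded :: "('a::euclidean_space \<Rightarrow> real) \<Rightarrow> bool" where
  "essentially_bounded g \<longleftrightarrow> g \<in> borel_measurable lborel \<and>
      (\<exists>C. AE x in lborel. \<bar>g x\<bar> \<le> C)"

definition campanato :: "real \<Rightarrow> ('a::euclidean_space \<Rightarrow> real) \<Rightarrow> bool" where
  "campanato p g \<longleftrightarrow> locally_integrable g \<and>
     (\<exists>C. \<forall>x r. r > 0 \<longrightarrow>
        (LINT y:ball x r|lborel. \<bar>g y - poly_proj (deg_p p DIM('a)) (ball x r) g y\<bar>)
          / orlicz_norm p (indicator (ball x r)) \<le> C)"

definition campanato_loc :: "real \<Rightarrow> ('a::euclidean_space \<Rightarrow> real) \<Rightarrow> bool" where
  "campanato_loc p g \<longleftrightarrow> locally_integrable g \<and>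
     (\<exists>C. (\<forall>x r. r > 0 \<longrightarrow> measure lborel (ball x r) < 1 \<longrightarrow>
        (LINT y:ball x r|lborel. \<bar>g y - poly_proj (deg_p p DIM('a)) (ball x r) g y\<bar>)
          / orlicz_norm p (indicator (ball x r)) \<le> C) \<and>
         (\<forall>x r. r > 0 \<longrightarrow> measure lborel (ball x r) \<ge> 1 \<longrightarrow>
        (LINT y:ball x r|lborel. \<bar>g y\<bar>)
          / orlicz_norm p (indicator (ball x r)) \<le> C))"

end

theory Submission
  imports Defs "HOL-Computational_Algebra.Polynomial"
begin


definition Bd :: "'a::euclidean_space set \<Rightarrow> ('a \<Rightarrow> real) \<Rightarrow> bool" where
  "Bd B f \<longleftrightarrow> f \<in> borel_measurable lborel \<and> (\<exists>C. AE x in lborel. x \<in> B \<longrightarrow> \<bar>f x\<bar> \<le> C)"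

definition ip :: "'a::euclidean_space set \<Rightarrow> ('a \<Rightarrow> real) \<Rightarrow> ('a \<Rightarrow> real) \<Rightarrow> real" where
  "ip B f h = (LINT x:B|lborel. f x * h x)"

lemma Bd_mult: "Bd B f \<Longrightarrow> Bd B h \<Longrightarrow> Bd B (\<lambda>x. f x * h x)"
proof -
  assume f: "Bd B f" and h: "Bd B h"
  then obtain C1 C2 where c1: "AE x in lborel. x \<in> B \<longrightarrow> \<bar>f x\<bar> \<le> C1"
    and c2: "AE x in lborel. x \<in> B \<longrightarrow> \<bar>h x\<bar> \<le> C2" unfolding Bd_def by blast
  have "AE x in lborel. x \<in> B \<longrightarrow> \<bar>f x * h x\<bar> \<le> C1 * C2"
    using c1 c2
  proof eventually_elim
    case (elim x) then show ?case
      by (auto simp: abs_mult intro!: mult_mono)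
  qed
  then show ?thesis using f h unfolding Bd_def by auto
qed

lemma Bd_add: "Bd B f \<Longrightarrow> Bd B h \<Longrightarrow> Bd B (\<lambda>x. f x + h x)"
proof -
  assume f: "Bd B f" and h: "Bd B h"
  then obtain C1 C2 where c1: "AE x in lborel. x \<in> B \<longrightarrow> \<bar>f x\<bar> \<le> C1"
    and c2: "AE x in lborel. x \<in> B \<longrightarrow> \<bar>h x\<bar> \<le> C2" unfolding Bd_def by blast
  have "AE x in lborel. x \<in> B \<longrightarrow> \<bar>f x + h x\<bar> \<le> C1 + C2"
    using c1 c2 by eventually_elim auto
  then show ?thesis using f h unfolding Bd_def by auto
qed

lemma Bd_const: "Bd B (\<lambda>x. a)"
  unfolding Bd_def by auto

lemma Bd_scale: "Bd B f \<Longrightarrow> Bd B (\<lambda>x. a * f x)"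
  using Bd_mult[OF Bd_const] by blast

lemma Bd_diff: "Bd B f \<Longrightarrow> Bd B h \<Longrightarrow> Bd B (\<lambda>x. f x - h x)"
  using Bd_add[of B f "\<lambda>x. (-1) * h x"] Bd_scale[of B h "-1"] by simp

lemma Bd_sum: "finite A \<Longrightarrow> (\<And>i. i \<in> A \<Longrightarrow> Bd B (u i)) \<Longrightarrow> Bd B (\<lambda>x. \<Sum>i\<in>A. c i * u i x)"
proof (induction A rule: finite_induct)
  case empty then show ?case by (simp add: Bd_const)
next
  case (insert a A) then show ?case
    by (simp add: Bd_add Bd_scale)
qed

context
  fixes B :: "'a::euclidean_space set"
  assumes Bm: "B \<in> sets lborel" and Bfin: "emeasure lborel B < \<infinity>"
begin

lemma Bd_int: "Bd B f \<Longrightarrow> set_integrable lborel B f"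
proof -
  assume f: "Bd B f"
  then obtain C where c: "AE x in lborel. x \<in> B \<longrightarrow> \<bar>f x\<bar> \<le> C" and fm: "f \<in> borel_measurable lborel"
    unfolding Bd_def by blast
  have i: "integrable lborel (\<lambda>x. C * indicator B x)"
    using Bm Bfin by auto
  have a: "AE x in lborel. norm (indicator B x *\<^sub>R f x) \<le> norm (C * indicator B x)"
    using c by eventually_elim (auto simp: indicator_def)
  have m: "(\<lambda>x. indicator B x *\<^sub>R f x) \<in> borel_measurable lborel"
    using fm Bm by simp
  show ?thesis unfolding set_integrable_def
    by (rule Bochner_Integration.integrable_bound[OF i m a])
qed

lemma ip_add: "Bd B f \<Longrightarrow> Bd B g \<Longrightarrow> Bd B k \<Longrightarrow> ip B (\<lambda>x. f x + g x) k = ip B f k + ip B g k"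
  unfolding ip_def distrib_right
  by (rule set_integral_add(2); rule Bd_int; simp add: Bd_mult)

lemma ip_diff: "Bd B f \<Longrightarrow> Bd B g \<Longrightarrow> Bd B k \<Longrightarrow> ip B (\<lambda>x. f x - g x) k = ip B f k - ip B g k"
  unfolding ip_def left_diff_distrib
  by (rule set_integral_diff(2); rule Bd_int; simp add: Bd_mult)

lemma ip_scale: "ip B (\<lambda>x. a * f x) k = a * ip B f k"
  unfolding ip_def by (simp add: mult.assoc)

lemma ip_comm: "ip B f k = ip B k f"
  unfolding ip_def by (simp add: mult.commute)

lemma ip_sum: "finite A \<Longrightarrow> (\<And>i. i \<in> A \<Longrightarrow> Bd B (u i)) \<Longrightarrow> Bd B k \<Longrightarrow>
   ip B (\<lambda>x. \<Sum>i\<in>A. c i * u i x) k = (\<Sum>i\<in>A. c i * ip B (u i) k)"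
proof (induction A rule: finite_induct)
  case empty then show ?case by (simp add: ip_def)
next
  case (insert a A)
  have "ip B (\<lambda>x. \<Sum>i\<in>insert a A. c i * u i x) k = ip B (\<lambda>x. c a * u a x + (\<Sum>i\<in>A. c i * u i x)) k"
    using insert by simp
  also have "\<dots> = c a * ip B (u a) k + ip B (\<lambda>x. \<Sum>i\<in>A. c i * u i x) k"
    using insert by (subst ip_add) (auto simp: Bd_scale Bd_sum ip_scale)
  finally show ?case using insert by simp
qed

lemma ip_self_zero: "Bd B r \<Longrightarrow> Bd B k \<Longrightarrow> ip B r r = 0 \<Longrightarrow> ip B k r = 0"
proof -
  assume r: "Bd B r" and k: "Bd B k" and z: "ip B r r = 0"
  have int: "integrable lborel (\<lambda>x. indicator B x *\<^sub>R (r x * r x))"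
    using Bd_int[OF Bd_mult[OF r r]] unfolding set_integrable_def .
  have "AE x in lborel. indicator B x *\<^sub>R (r x * r x) = 0"
    using z int unfolding ip_def set_lebesgue_integral_def
    by (subst (asm) integral_nonneg_eq_0_iff_AE) (auto simp: indicator_def)
  then have "AE x in lborel. indicator B x *\<^sub>R (k x * r x) = 0"
    by eventually_elim (auto simp: indicator_def split: if_splits)
  then show ?thesis unfolding ip_def set_lebesgue_integral_def
    by (simp add: integral_eq_zero_AE)
qed

lemma ip_diff_scale: "Bd B f \<Longrightarrow> Bd B g \<Longrightarrow> Bd B k \<Longrightarrow>
   ip B (\<lambda>x. f x - a * g x) k = ip B f k - a * ip B g k"
  by (subst ip_diff) (auto simp: Bd_scale ip_scale)

lemma ip_add_right: "Bd B f \<Longrightarrow> Bd B g \<Longrightarrow> Bd B k \<Longrightarrow> ip B k (\<lambda>x. f x + g x) = ip B k f + ip B k g"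
  by (metis ip_add ip_comm)

lemma proj_ex:
  assumes "finite A"
  shows "(\<And>i. i \<in> A \<Longrightarrow> Bd B (u i)) \<Longrightarrow> Bd B h \<Longrightarrow>
    \<exists>c. \<forall>j\<in>A. ip B (\<lambda>x. h x - (\<Sum>i\<in>A. c i * u i x)) (u j) = 0"
  using assms
proof (induction A arbitrary: h rule: finite_induct)
  case empty then show ?case by simp
next
  case (insert a A h)
  have uA: "\<And>i. i \<in> A \<Longrightarrow> Bd B (u i)" and ua: "Bd B (u a)" using insert by auto
  obtain c0 where c0: "\<forall>j\<in>A. ip B (\<lambda>x. h x - (\<Sum>i\<in>A. c0 i * u i x)) (u j) = 0"
    using insert.IH[OF uA insert.prems(2)] by blast
  obtain d where d: "\<forall>j\<in>A. ip B (\<lambda>x. u a x - (\<Sum>i\<in>A. d i * u i x)) (u j) = 0"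
    using insert.IH[OF uA ua] by blast
  define P0 where "P0 = (\<lambda>x. \<Sum>i\<in>A. c0 i * u i x)"
  define Q where "Q = (\<lambda>x. \<Sum>i\<in>A. d i * u i x)"
  define r where "r = (\<lambda>x. u a x - Q x)"
  define E where "E = (\<lambda>x. h x - P0 x)"
  have BP0: "Bd B P0" unfolding P0_def using Bd_sum[OF insert(1) uA] .
  have BQ: "Bd B Q" unfolding Q_def using Bd_sum[OF insert(1) uA] .
  have Br: "Bd B r" unfolding r_def using Bd_diff[OF ua BQ] .
  have BE: "Bd B E" unfolding E_def using Bd_diff[OF insert.prems(2) BP0] .
  have Eu: "\<forall>j\<in>A. ip B E (u j) = 0" using c0 unfolding E_def P0_def by simp
  have ru: "\<forall>j\<in>A. ip B r (u j) = 0" using d unfolding r_def Q_def by simp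
  have EQ: "ip B E Q = 0"
    using ip_sum[OF insert(1) uA BE, where c=d] Eu unfolding Q_def by (simp add: ip_comm)
  have rQ: "ip B r Q = 0"
    using ip_sum[OF insert(1) uA Br, where c=d] ru unfolding Q_def by (simp add: ip_comm)
  have uar: "u a = (\<lambda>x. r x + Q x)" unfolding r_def by auto
  show ?case
  proof (cases "ip B r r = 0")
    case True
    define c where "c = c0(a := 0)"
    have sc: "(\<Sum>i\<in>insert a A. c i * u i x) = P0 x" for x
    proof -
      have "(\<Sum>i\<in>A. c i * u i x) = P0 x"
        unfolding P0_def c_def using insert(2) by (intro sum.cong) auto
      then show ?thesis using insert(1,2) by (simp add: c_def)
    qed
    have Er: "ip B E r = 0" using ip_self_zero[OF Br BE True] .
    have "ip B E (u a) = 0"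
      using Er EQ by (simp add: uar ip_add_right[OF Br BQ BE])
    then show ?thesis using Eu
      by (intro exI[of _ c]) (auto simp: sc E_def[symmetric])
  next
    case False
    define \<alpha> where "\<alpha> = ip B E r / ip B r r"
    define c where "c = (\<lambda>i. c0 i - \<alpha> * d i)(a := \<alpha>)"
    have sc: "(\<Sum>i\<in>insert a A. c i * u i x) = P0 x + \<alpha> * r x" for x
    proof -
      have "(\<Sum>i\<in>insert a A. c i * u i x) = \<alpha> * u a x + (\<Sum>i\<in>A. (c0 i - \<alpha> * d i) * u i x)"
      proof -
        have "(\<Sum>i\<in>A. c i * u i x) = (\<Sum>i\<in>A. (c0 i - \<alpha> * d i) * u i x)"
          unfolding c_def using insert(2) by (intro sum.cong) auto
        then show ?thesis using insert(1,2) by (simp add: c_def)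
      qed
      also have "\<dots> = P0 x + \<alpha> * r x"
        unfolding P0_def r_def Q_def
        by (simp add: left_diff_distrib sum_subtractf sum_distrib_left right_diff_distrib mult.assoc)
      finally show ?thesis .
    qed
    have eq: "(\<lambda>x. h x - (\<Sum>i\<in>insert a A. c i * u i x)) = (\<lambda>x. E x - \<alpha> * r x)"
      by (auto simp: sc E_def)
    have k: "ip B (\<lambda>x. E x - \<alpha> * r x) k = ip B E k - \<alpha> * ip B r k" if "Bd B k" for k
      using ip_diff_scale[OF BE Br that] .
    have BE': "Bd B (\<lambda>x. E x - \<alpha> * r x)" using Bd_diff[OF BE Bd_scale[OF Br]] .
    have "ip B (\<lambda>x. E x - \<alpha> * r x) (u a) = 0"
      unfolding uar ip_add_right[OF Br BQ BE']
      using k[OF Br] k[OF BQ] EQ rQ False by (simp add: \<alpha>_def)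
    moreover have "\<forall>j\<in>A. ip B (\<lambda>x. E x - \<alpha> * r x) (u j) = 0"
      using k uA Eu ru by simp
    ultimately show ?thesis
      by (intro exI[of _ c]) (simp add: eq)
  qed
qed

end


definition mnm :: "('a::euclidean_space \<Rightarrow> nat) \<Rightarrow> 'a \<Rightarrow> real" where
  "mnm \<alpha> x = (\<Prod>b\<in>Basis. (x \<bullet> b) ^ \<alpha> b)"

lemma polys_mono: "polys d = {P. \<exists>c. P = (\<lambda>x. \<Sum>\<alpha>\<in>multi_indices d. c \<alpha> * mnm \<alpha> x)}"
  unfolding polys_def mnm_def ..

lemma finite_multi_indices: "finite (multi_indices d :: ('a::euclidean_space \<Rightarrow> nat) set)"
proof -
  let ?F = "\<lambda>f (b::'a). if b \<in> Basis then f b else (0::nat)"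
  have "multi_indices d \<subseteq> ?F ` (Basis \<rightarrow>\<^sub>E {..d})"
  proof
    fix \<alpha> :: "'a \<Rightarrow> nat" assume a: "\<alpha> \<in> multi_indices d"
    then have z: "\<forall>b. b \<notin> Basis \<longrightarrow> \<alpha> b = 0" and s: "(\<Sum>b\<in>Basis. \<alpha> b) \<le> d"
      unfolding multi_indices_def by auto
    have "\<alpha> b \<le> d" if "b \<in> Basis" for b
      using member_le_sum[of b Basis \<alpha>] that s by auto
    then have "restrict \<alpha> Basis \<in> Basis \<rightarrow>\<^sub>E {..d}" by auto
    moreover have "\<alpha> = ?F (restrict \<alpha> Basis)" using z by auto
    ultimately show "\<alpha> \<in> ?F ` (Basis \<rightarrow>\<^sub>E {..d})" by blast
  qed
  moreover have "finite (Basis \<rightarrow>\<^sub>E {..d} :: ('a \<Rightarrow> nat) set)"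
    by (intro finite_PiE) auto
  ultimately show ?thesis by (rule finite_subset[OF _ finite_imageI])
qed

lemma mono_cont: "continuous_on UNIV (mnm \<alpha>)"
  unfolding mnm_def by (intro continuous_intros)

lemma poly_cont: "continuous_on UNIV (\<lambda>x::'a::euclidean_space. \<Sum>\<alpha>\<in>A. c \<alpha> * mnm \<alpha> x)"
  unfolding mnm_def by (intro continuous_intros)

lemma mono_Bd: "Bd (ball x0 r) (mnm \<alpha>)"
proof -
  have "mnm \<alpha> \<in> borel_measurable lborel"
    by (simp add: borel_measurable_continuous_onI[OF mono_cont])
  moreover have "\<bar>mnm \<alpha> x\<bar> \<le> (\<Prod>b\<in>(Basis::'a set). (norm x0 + r) ^ \<alpha> b)" if "x \<in> ball x0 r" for x
  proof -
    have nx: "norm x \<le> norm x0 + r" using that norm_triangle_ineq2[of x x0]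
      by (auto simp: dist_norm norm_minus_commute)
    have "\<bar>mnm \<alpha> x\<bar> = (\<Prod>b\<in>Basis. \<bar>x \<bullet> b\<bar> ^ \<alpha> b)"
      unfolding mnm_def by (simp add: abs_prod power_abs)
    also have "\<dots> \<le> (\<Prod>b\<in>(Basis::'a set). (norm x0 + r) ^ \<alpha> b)"
    proof (intro prod_mono conjI)
      fix b :: 'a assume "b \<in> Basis"
      then have "\<bar>x \<bullet> b\<bar> \<le> norm x" by (simp add: Basis_le_norm)
      then show "\<bar>x \<bullet> b\<bar> ^ \<alpha> b \<le> (norm x0 + r) ^ \<alpha> b"
        using nx by (intro power_mono) auto
    qed auto
    finally show ?thesis .
  qed
  ultimately show ?thesis unfolding Bd_def
    by (intro conjI exI[of _ "\<Prod>b\<in>(Basis::'a set). (norm x0 + r) ^ \<alpha> b"] AE_I2) auto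
qed

lemma cont_ae_zero:
  fixes f :: "'a::euclidean_space \<Rightarrow> real"
  assumes "continuous_on UNIV f" "open S" "AE x in lborel. x \<in> S \<longrightarrow> f x = 0" "y \<in> S"
  shows "f y = 0"
proof (rule ccontr)
  assume ne: "f y \<noteq> 0"
  have o: "open (S \<inter> {x. f x \<noteq> 0})"
    using assms(1,2) by (intro open_Int open_Collect_neq continuous_intros) auto
  have yU: "y \<in> S \<inter> {x. f x \<noteq> 0}" using ne assms(4) by simp
  obtain e where e: "e > 0" "ball y e \<subseteq> S \<inter> {x. f x \<noteq> 0}"
    by (rule openE[OF o yU])
  obtain N where N: "{x \<in> space lborel. \<not> (x \<in> S \<longrightarrow> f x = 0)} \<subseteq> N" "emeasure lborel N = 0" "N \<in> sets lborel"
    by (rule AE_E[OF assms(3)])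
  have "ball y e \<subseteq> N" using e N(1) by auto
  then have "emeasure lborel (ball y e) \<le> emeasure lborel N"
    using N(3) by (intro emeasure_mono) auto
  also have "\<dots> = 0" using N(2) by simp
  finally have "emeasure lborel (ball y e) = 0" by simp
  moreover have "emeasure lborel (ball y e) > 0"
    using e by (simp add: emeasure_ball)
  ultimately show False by simp
qed

lemma poly_line:
  fixes x0 y :: "'a::euclidean_space"
  shows "\<exists>q. \<forall>t. (\<Sum>\<alpha>\<in>A. c \<alpha> * mnm \<alpha> (x0 + t *\<^sub>R (y - x0))) = poly q t"
proof (rule exI[of _ "\<Sum>\<alpha>\<in>A. smult (c \<alpha>) (\<Prod>b\<in>Basis. [:x0 \<bullet> b, (y - x0) \<bullet> b:] ^ \<alpha> b)"], intro allI)
  fix t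
  have l: "poly [:x0 \<bullet> b, (y - x0) \<bullet> b:] t = (x0 + t *\<^sub>R (y - x0)) \<bullet> b" for b
    by (simp add: inner_add_left inner_diff_left)
  have m: "poly (\<Prod>b\<in>Basis. [:x0 \<bullet> b, (y - x0) \<bullet> b:] ^ \<alpha> b) t = mnm \<alpha> (x0 + t *\<^sub>R (y - x0))" for \<alpha>
    unfolding mnm_def poly_prod poly_power l ..
  show "(\<Sum>\<alpha>\<in>A. c \<alpha> * mnm \<alpha> (x0 + t *\<^sub>R (y - x0))) =
    poly (\<Sum>\<alpha>\<in>A. smult (c \<alpha>) (\<Prod>b\<in>Basis. [:x0 \<bullet> b, (y - x0) \<bullet> b:] ^ \<alpha> b)) t"
    unfolding poly_sum poly_smult m ..
qed

lemma poly_zero_ball: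
  fixes x0 :: "'a::euclidean_space"
  assumes "r > 0" "\<forall>x\<in>ball x0 r. (\<Sum>\<alpha>\<in>A. c \<alpha> * mnm \<alpha> x) = 0"
  shows "(\<Sum>\<alpha>\<in>A. c \<alpha> * mnm \<alpha> y) = 0"
proof -
  obtain q where q: "\<And>t. (\<Sum>\<alpha>\<in>A. c \<alpha> * mnm \<alpha> (x0 + t *\<^sub>R (y - x0))) = poly q t"
    using poly_line by blast
  define \<delta> where "\<delta> = r / (norm (y - x0) + 1)"
  have dpos: "\<delta> > 0" unfolding \<delta>_def using assms(1) by (intro divide_pos_pos) (auto intro: add_nonneg_pos)
  have "{0<..<\<delta>} \<subseteq> {t. poly q t = 0}"
  proof
    fix t assume t: "t \<in> {0<..<\<delta>}"
    have np: "0 < norm (y - x0) + 1" by (auto intro: add_nonneg_pos)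
    have "norm (y - x0) * t \<le> (norm (y - x0) + 1) * t" using t by (intro mult_right_mono) auto
    also have "\<dots> < (norm (y - x0) + 1) * \<delta>" using t np by (intro mult_strict_left_mono) auto
    also have "\<dots> = r" unfolding \<delta>_def using np by simp
    finally have "dist x0 (x0 + t *\<^sub>R (y - x0)) < r"
      using t by (simp add: dist_norm mult.commute)
    then show "t \<in> {t. poly q t = 0}" using assms(2) q[of t] by auto
  qed
  then have "q = 0"
    using poly_roots_finite[of q] dpos by (metis finite_subset infinite_Ioo)
  then show ?thesis using q[of 1] by simp
qed



lemma Bd_abs: "Bd B f \<Longrightarrow> Bd B (\<lambda>x. \<bar>f x\<bar>)"
  unfolding Bd_def by auto

lemma ip_self_ae:
  assumes Bm: "B \<in> sets lborel" and Bfin: "emeasure lborel B < \<infinity>"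
    and r: "Bd B r" and z: "ip B r r = 0"
  shows "AE x in lborel. x \<in> B \<longrightarrow> r x = 0"
proof -
  have int: "integrable lborel (\<lambda>x. indicator B x *\<^sub>R (r x * r x))"
    using Bd_int[OF Bm Bfin Bd_mult[OF r r]] unfolding set_integrable_def .
  have "AE x in lborel. indicator B x *\<^sub>R (r x * r x) = 0"
    using z int unfolding ip_def set_lebesgue_integral_def
    by (subst (asm) integral_nonneg_eq_0_iff_AE) (auto simp: indicator_def)
  then show ?thesis
    by eventually_elim (auto simp: indicator_def split: if_splits)
qed

lemma poly_Bd: "finite A \<Longrightarrow> Bd (ball x0 r) (\<lambda>x. \<Sum>\<alpha>\<in>A. c \<alpha> * mnm \<alpha> x)"
  by (rule Bd_sum) (auto simp: mono_Bd)

lemma poly_proj_spec: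
  fixes x0 :: "'a::euclidean_space"
  assumes r: "r > 0" and g: "Bd (ball x0 r) g"
  shows "poly_proj d (ball x0 r) g \<in> polys d \<and>
     (\<forall>R\<in>polys d. (LINT x:ball x0 r|lborel. (g x - poly_proj d (ball x0 r) g x) * R x) = 0)"
proof -
  let ?B = "ball x0 r"
  let ?I = "multi_indices d :: ('a \<Rightarrow> nat) set"
  have Bm: "?B \<in> sets lborel" by simp
  have Bfin: "emeasure lborel ?B < \<infinity>" by (rule emeasure_lborel_ball_finite)
  have fin: "finite ?I" by (rule finite_multi_indices)
  have uB: "\<And>i. i \<in> ?I \<Longrightarrow> Bd ?B (mnm i)" by (rule mono_Bd)
  define Prop where "Prop = (\<lambda>P. P \<in> polys d \<and>
      (\<forall>R\<in>polys d. (LINT x:?B|lborel. (g x - P x) * R x) = 0))"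
  have orth: "Prop (\<lambda>x. \<Sum>i\<in>?I. c i * mnm i x)"
    if c: "\<forall>j\<in>?I. ip ?B (\<lambda>x. g x - (\<Sum>i\<in>?I. c i * mnm i x)) (mnm j) = 0" for c
  proof -
    have E: "Bd ?B (\<lambda>x. g x - (\<Sum>i\<in>?I. c i * mnm i x))"
      by (rule Bd_diff[OF g poly_Bd[OF fin]])
    have "ip ?B (\<lambda>x. g x - (\<Sum>i\<in>?I. c i * mnm i x)) R = 0" if "R \<in> polys d" for R
    proof -
      obtain c' where R: "R = (\<lambda>x. \<Sum>i\<in>?I. c' i * mnm i x)"
        using \<open>R \<in> polys d\<close> unfolding polys_mono by blast
      show ?thesis unfolding R
        by (subst ip_comm[OF Bm Bfin], subst ip_sum[OF Bm Bfin fin uB E]) (use c in \<open>auto intro!: sum.neutral simp: ip_comm[OF Bm Bfin, of "mnm _"]\<close>)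
    qed
    then show ?thesis unfolding Prop_def ip_def polys_mono by blast
  qed
  obtain c where c: "\<forall>j\<in>?I. ip ?B (\<lambda>x. g x - (\<Sum>i\<in>?I. c i * mnm i x)) (mnm j) = 0"
  proof -
    have "\<exists>c. \<forall>j\<in>?I. ip ?B (\<lambda>x. g x - (\<Sum>i\<in>?I. c i * mnm i x)) (mnm j) = 0"
      by (rule proj_ex[OF Bm Bfin fin, where u=mnm]) (auto simp: mono_Bd g)
    then show ?thesis using that by blast
  qed
  have ex: "Prop (\<lambda>x. \<Sum>i\<in>?I. c i * mnm i x)" using orth[OF c] .
  have uniq: "P1 = P2" if p1: "Prop P1" and p2: "Prop P2" for P1 P2
  proof -
    obtain c1 where c1: "P1 = (\<lambda>x. \<Sum>i\<in>?I. c1 i * mnm i x)"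
      using p1 unfolding Prop_def polys_mono by blast
    obtain c2 where c2: "P2 = (\<lambda>x. \<Sum>i\<in>?I. c2 i * mnm i x)"
      using p2 unfolding Prop_def polys_mono by blast
    define e where "e = (\<lambda>i. c1 i - c2 i)"
    define D where "D = (\<lambda>x. \<Sum>i\<in>?I. e i * mnm i x)"
    have DP: "D x = P1 x - P2 x" for x
      unfolding D_def e_def c1 c2 by (simp add: left_diff_distrib sum_subtractf)
    have Dp: "D \<in> polys d" unfolding D_def polys_mono by blast
    have BD: "Bd ?B D" unfolding D_def by (rule poly_Bd[OF fin])
    have BP1: "Bd ?B P1" unfolding c1 by (rule poly_Bd[OF fin])
    have BP2: "Bd ?B P2" unfolding c2 by (rule poly_Bd[OF fin])
    have o1: "ip ?B (\<lambda>x. g x - P1 x) D = 0" using p1 Dp unfolding Prop_def ip_def by blast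
    have o2: "ip ?B (\<lambda>x. g x - P2 x) D = 0" using p2 Dp unfolding Prop_def ip_def by blast
    have "(\<lambda>x. D x) = (\<lambda>x. (g x - P2 x) - (g x - P1 x))" using DP by auto
    then have "ip ?B D D = ip ?B (\<lambda>x. g x - P2 x) D - ip ?B (\<lambda>x. g x - P1 x) D"
      by (metis ip_diff[OF Bm Bfin Bd_diff[OF g BP2] Bd_diff[OF g BP1] BD])
    then have "ip ?B D D = 0" using o1 o2 by simp
    then have ae: "AE x in lborel. x \<in> ?B \<longrightarrow> D x = 0" by (rule ip_self_ae[OF Bm Bfin BD])
    have "\<forall>x\<in>?B. D x = 0"
      using cont_ae_zero[OF _ open_ball ae] poly_cont unfolding D_def by blast
    then have "\<forall>y. D y = 0" unfolding D_def using poly_zero_ball[OF r] by blast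
    then show ?thesis using DP by (auto simp: fun_eq_iff)
  qed
  have "Prop (THE P. Prop P)"
    by (rule theI[of Prop, OF ex]) (rule uniq[OF _ ex])
  then show ?thesis unfolding poly_proj_def Prop_def by simp
qed



lemma proj_bound:
  fixes x0 :: "'a::euclidean_space"
  assumes r: "r > 0" and gm: "g \<in> borel_measurable lborel"
    and gb: "AE x in lborel. \<bar>g x\<bar> \<le> M" and M: "M > 0"
  shows "(LINT y:ball x0 r|lborel. \<bar>g y\<bar>) \<le> M * measure lborel (ball x0 r)"
    and "(LINT y:ball x0 r|lborel. \<bar>g y - poly_proj d (ball x0 r) g y\<bar>) \<le> 2 * M * measure lborel (ball x0 r)"
proof -
  let ?B = "ball x0 r"
  define m where "m = measure lborel ?B"
  have Bm: "?B \<in> sets lborel" by simp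
  have Bfin: "emeasure lborel ?B < \<infinity>" by (rule emeasure_lborel_ball_finite)
  have Bfin': "emeasure lborel ?B \<noteq> \<infinity>" using Bfin by simp
  have gB: "AE x in lborel. x \<in> ?B \<longrightarrow> \<bar>g x\<bar> \<le> M"
    using gb by (rule eventually_mono) auto
  have g: "Bd ?B g" unfolding Bd_def using gm gB by blast
  define P where "P = poly_proj d ?B g"
  have spec: "P \<in> polys d" "\<forall>R\<in>polys d. (LINT x:?B|lborel. (g x - P x) * R x) = 0"
    using poly_proj_spec[OF r g, of d] unfolding P_def by auto
  obtain c where c: "P = (\<lambda>x. \<Sum>i\<in>multi_indices d. c i * mnm i x)"
    using spec(1) unfolding polys_mono by blast
  have BP: "Bd ?B P" unfolding c by (rule poly_Bd[OF finite_multi_indices])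
  have int: "set_integrable lborel ?B f" if "Bd ?B f" for f
    using Bd_int[OF Bm Bfin that] .
  have iconst: "(LINT x:?B|lborel. a) = m * a" for a :: real
    unfolding m_def using set_integral_const[OF Bm Bfin', of a] by simp
  have "ip ?B (\<lambda>x. g x - P x) P = 0" using spec unfolding ip_def by blast
  then have PP: "ip ?B P P = ip ?B g P"
    using ip_diff[OF Bm Bfin g BP BP] by simp
  have "ip ?B g P \<le> (LINT x:?B|lborel. M * \<bar>P x\<bar>)"
    unfolding ip_def
  proof (rule set_integral_mono_AE)
    show "set_integrable lborel ?B (\<lambda>x. g x * P x)" by (rule int[OF Bd_mult[OF g BP]])
    show "set_integrable lborel ?B (\<lambda>x. M * \<bar>P x\<bar>)" by (rule int[OF Bd_scale[OF Bd_abs[OF BP]]])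
    show "AE x\<in>?B in lborel. g x * P x \<le> M * \<bar>P x\<bar>"
      using gb
    proof eventually_elim
      case (elim x)
      have "g x * P x \<le> \<bar>g x\<bar> * \<bar>P x\<bar>" by (metis abs_ge_self abs_mult)
      also have "\<dots> \<le> M * \<bar>P x\<bar>" using elim by (intro mult_right_mono) auto
      finally show ?case by blast
    qed
  qed
  then have PP2: "ip ?B P P \<le> M * (LINT x:?B|lborel. \<bar>P x\<bar>)" using PP by simp
  have pw: "\<bar>a\<bar> \<le> a * a / (2 * M) + M / 2" for a :: real
  proof -
    have "0 \<le> (\<bar>a\<bar> - M) * (\<bar>a\<bar> - M)" by simp
    then have "2 * M * \<bar>a\<bar> \<le> a * a + M * M" by (simp add: algebra_simps abs_mult_self_eq)
    then show ?thesis using M by (simp add: field_simps)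
  qed
  have pw2: "\<bar>a\<bar> \<le> inverse (2 * M) * (a * a) + M / 2" for a :: real
  proof -
    have "inverse (2 * M) * (a * a) = a * a / (2 * M)" by (simp add: field_simps)
    then show ?thesis using pw[of a] by simp
  qed
  have iPP: "set_integrable lborel ?B (\<lambda>x. inverse (2 * M) * (P x * P x))"
    by (rule int) (intro Bd_scale Bd_mult BP)
  have iC: "set_integrable lborel ?B (\<lambda>x. M / 2)" by (rule int[OF Bd_const])
  have "(LINT x:?B|lborel. \<bar>P x\<bar>) \<le> (LINT x:?B|lborel. inverse (2 * M) * (P x * P x) + M / 2)"
    by (rule set_integral_mono[OF int[OF Bd_abs[OF BP]] set_integral_add(1)[OF iPP iC]])
       (rule pw2)
  also have "\<dots> = inverse (2 * M) * ip ?B P P + m * (M / 2)"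
    unfolding ip_def set_integral_add(2)[OF iPP iC] set_integral_mult_right iconst ..
  also have "\<dots> = ip ?B P P / (2 * M) + m * (M / 2)" by (simp only: divide_inverse mult.commute)
  also have "\<dots> \<le> M * (LINT x:?B|lborel. \<bar>P x\<bar>) / (2 * M) + m * (M / 2)"
    using PP2 M by (intro add_right_mono divide_right_mono) auto
  finally have IP: "(LINT x:?B|lborel. \<bar>P x\<bar>) \<le> M * m"
    using M by (simp add: field_simps)
  have IG: "(LINT x:?B|lborel. \<bar>g x\<bar>) \<le> M * m"
  proof -
    have "(LINT x:?B|lborel. \<bar>g x\<bar>) \<le> (LINT x:?B|lborel. M)"
      by (rule set_integral_mono_AE[OF int[OF Bd_abs[OF g]] int[OF Bd_const]])
         (use gb in \<open>auto elim: eventually_mono\<close>)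
    then show ?thesis using iconst[of M] by (simp add: mult.commute)
  qed
  then show "(LINT y:ball x0 r|lborel. \<bar>g y\<bar>) \<le> M * measure lborel (ball x0 r)"
    unfolding m_def .
  have "(LINT x:?B|lborel. \<bar>g x - P x\<bar>) \<le> (LINT x:?B|lborel. \<bar>g x\<bar> + \<bar>P x\<bar>)"
    by (rule set_integral_mono[OF int[OF Bd_abs[OF Bd_diff[OF g BP]]] int[OF Bd_add[OF Bd_abs[OF g] Bd_abs[OF BP]]]])
       (rule abs_triangle_ineq4)
  also have "\<dots> = (LINT x:?B|lborel. \<bar>g x\<bar>) + (LINT x:?B|lborel. \<bar>P x\<bar>)"
    by (rule set_integral_add(2)[OF int[OF Bd_abs[OF g]] int[OF Bd_abs[OF BP]]])
  finally show "(LINT y:ball x0 r|lborel. \<bar>g y - poly_proj d (ball x0 r) g y\<bar>) \<le> 2 * M * measure lborel (ball x0 r)"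
    using IP IG unfolding P_def m_def by simp
qed



lemma Phi_le: "t \<ge> 0 \<Longrightarrow> Phi p t \<le> t"
  unfolding Phi_def using frac_le[of t t 1 "1 + t powr (1 - p)"] by simp

lemma low_aux:
  assumes p0: "0 < p" and p1: "p < 1" and m1: "m \<ge> 1" and l: "l > 0"
    and c: "Phi p (1 / l) * m \<le> 1"
  shows "2 powr (-1/p) / 2 * m \<le> l"
proof -
  define k where "k = 2 powr (-1/p) / 2"
  have k1: "1 \<le> 2 powr (1/p)" using p0 by (intro ge_one_powr_ge_zero) auto
  have k2: "2 powr (-1/p) \<le> 1" using k1 by (simp add: powr_minus inverse_le_1_iff)
  have mpos: "m > 0" using m1 by linarith
  define t where "t = 1 / l"
  have t: "t > 0" unfolding t_def using l by simp
  have tl: "l = 1 / t" unfolding t_def using l by simp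
  have dpos: "1 + t powr (1 - p) > 0" by (simp add: add_pos_nonneg)
  have "Phi p t * m \<le> 1" using c unfolding t_def .
  then have "t * m / (1 + t powr (1 - p)) \<le> 1" unfolding Phi_def by simp
  then have c': "m * t \<le> 1 + t powr (1 - p)"
    using dpos by (simp add: divide_le_eq mult.commute)
  have "k * m \<le> l"
  proof (cases "t \<le> 1")
    case True
    have "t powr (1 - p) \<le> 1" using True t p1 by (intro powr_le1) auto
    then have "m * t \<le> 2" using c' by simp
    then have "m \<le> 2 * l" using t unfolding tl by (simp add: field_simps)
    moreover have "k \<le> 1/2" unfolding k_def using k2 by simp
    ultimately have "k * m \<le> (1/2) * m" "m \<le> 2 * l" using mpos by (auto intro: mult_right_mono)
    then show ?thesis by linarith
  next
    case False
    have t1: "1 \<le> t powr (1 - p)" using False p1 by (intro ge_one_powr_ge_zero) auto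
    have tp: "t powr (1 - p) = t * t powr (- p)"
      using t powr_add[of t 1 "- p"] by simp
    have "m * t \<le> 2 * (t * t powr (- p))" using c' t1 tp by simp
    then have mt: "m \<le> 2 * t powr (- p)" using t by (simp add: field_simps)
    have tm: "t powr (- p) \<le> 1" using ge_one_powr_ge_zero[of t p] False p0 by (simp add: powr_minus inverse_le_1_iff)
    have m2: "m \<le> 2" using mt tm by simp
    have "t powr p \<le> 2 / m" using mt t mpos by (simp add: powr_minus field_simps)
    also have "\<dots> \<le> 2" using m1 by (simp add: field_simps)
    finally have tp2: "t powr p \<le> 2" .
    have "t = (t powr p) powr (1 / p)" using t p0 by (simp add: powr_powr)
    also have "\<dots> \<le> 2 powr (1 / p)" using tp2 p0 by (intro powr_mono2) auto
    finally have "t \<le> 2 powr (1 / p)" .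
    then have "1 / (2 powr (1 / p)) \<le> l" unfolding tl using t by (intro divide_left_mono) auto
    then have "2 powr (-1/p) \<le> l" by (simp add: powr_minus_divide)
    moreover have "2 powr (-1/p) / 2 * m \<le> 2 powr (-1/p) / 2 * 2"
      using m2 by (intro mult_left_mono) auto
    moreover have "2 powr (-1/p) / 2 * 2 = 2 powr (-1/p)" by simp
    ultimately show ?thesis unfolding k_def by linarith
  qed
  then show ?thesis unfolding k_def .
qed


lemma Phi_nonneg: "t \<ge> 0 \<Longrightarrow> Phi p t \<ge> 0"
  unfolding Phi_def by simp

lemma Phi_zero: "Phi p 0 = 0"
  unfolding Phi_def by simp

lemma orlicz_lower:
  fixes x0 :: "'a::euclidean_space"
  assumes p0: "0 < p" and p1: "p < 1" and m1: "measure lborel (ball x0 r) \<ge> 1"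
  shows "orlicz_norm p (indicator (ball x0 r) :: 'a \<Rightarrow> real) \<ge> (2 powr (-1/p) / 2) * measure lborel (ball x0 r)"
proof -
  let ?B = "ball x0 r"
  define m where "m = measure lborel ?B"
  have m1': "m \<ge> 1" using m1 unfolding m_def .
  have mpos: "m > 0" using m1' by linarith
  have em: "emeasure lborel ?B = ennreal m"
    unfolding m_def using emeasure_lborel_ball_finite[of x0 r] by (simp add: emeasure_eq_ennreal_measure)
  have nn: "(\<integral>\<^sup>+ x. ennreal (Phi p (\<bar>indicator ?B x :: real\<bar> / l)) \<partial>lborel) = ennreal (Phi p (1 / l) * m)"
    if l: "l > 0" for l
  proof -
    have "(\<integral>\<^sup>+ x. ennreal (Phi p (\<bar>indicator ?B x :: real\<bar> / l)) \<partial>lborel)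
        = (\<integral>\<^sup>+ x. ennreal (Phi p (1 / l)) * indicator ?B x \<partial>lborel)"
      by (intro nn_integral_cong) (auto simp: indicator_def Phi_zero)
    also have "\<dots> = ennreal (Phi p (1 / l)) * emeasure lborel ?B"
      by (rule nn_integral_cmult_indicator) simp
    also have "\<dots> = ennreal (Phi p (1 / l) * m)"
      unfolding em using l mpos by (simp add: ennreal_mult Phi_nonneg)
    finally show ?thesis .
  qed
  define S where "S = {l::real. l > 0 \<and> (\<integral>\<^sup>+ x. ennreal (Phi p (\<bar>indicator ?B x :: real\<bar> / l)) \<partial>lborel) \<le> 1}"
  have S: "S = {l. l > 0 \<and> Phi p (1 / l) * m \<le> 1}"
    unfolding S_def using nn by (auto simp: ennreal_le_1)
  have "m \<in> S"
  proof -
    have "Phi p (1 / m) * m \<le> (1 / m) * m"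
      using mpos by (intro mult_right_mono Phi_le) auto
    then show ?thesis unfolding S using mpos by simp
  qed
  then have Sne: "S \<noteq> {}" by blast
  have low: "2 powr (-1/p) / 2 * m \<le> l" if "l \<in> S" for l
    using that unfolding S using low_aux[OF p0 p1 m1'] by blast
  have "2 powr (-1/p) / 2 * m \<le> Inf S" by (rule cInf_greatest[OF Sne low])
  then show ?thesis unfolding orlicz_norm_def S_def m_def .
qed

lemma ratio_bound:
  fixes a A N k m :: real
  assumes "0 \<le> a" "a \<le> A * m" "k * m \<le> N" "0 < k" "0 < m"
  shows "a / N \<le> A / k"
proof -
  have km: "0 < k * m" using assms by simp
  have N: "N > 0" using km assms(3) by linarith
  have 1: "a / N \<le> (A * m) / N" using assms N by (intro divide_right_mono) auto
  have 2: "(A * m) / N \<le> (A * m) / (k * m)"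
    using assms km N by (intro divide_left_mono) auto
  have 3: "(A * m) / (k * m) = A / k" using assms by simp
  show ?thesis using 1 2 3 by linarith
qed

lemma lint_abs_nonneg: "0 \<le> (LINT y:B|lborel. \<bar>f y :: real\<bar>)"
  unfolding set_lebesgue_integral_def
  by (intro integral_nonneg_AE AE_I2) (auto simp: indicator_def)

theorem lemma4p30:
  fixes p :: real
  assumes "0 < p" and "p < 1"
  shows "{g :: 'a::euclidean_space \<Rightarrow> real. essentially_bounded g \<and> campanato p g}
       = {g :: 'a \<Rightarrow> real. essentially_bounded g \<and> campanato_loc p g}"
proof -
  define k where "k = 2 powr (-1/p) / 2"
  have kpos: "k > 0" unfolding k_def by simp
  have eq: "campanato p g \<longleftrightarrow> campanato_loc p g" if eb: "essentially_bounded g" for g :: "'a \<Rightarrow> real"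
  proof -
    obtain M0 where gm: "g \<in> borel_measurable lborel" and gb0: "AE x in lborel. \<bar>g x\<bar> \<le> M0"
      using eb unfolding essentially_bounded_def by blast
    define M where "M = max M0 1"
    have M: "M > 0" unfolding M_def by simp
    have gb: "AE x in lborel. \<bar>g x\<bar> \<le> M" using gb0 by (rule eventually_mono) (auto simp: M_def)
    have nrm: "k * measure lborel (ball x r) \<le> orlicz_norm p (indicator (ball x r) :: 'a \<Rightarrow> real)"
      if "measure lborel (ball x r) \<ge> 1" for x :: 'a and r
      using orlicz_lower[OF assms that] unfolding k_def .
    show ?thesis
    proof
      assume c: "campanato p g"
      then obtain C where li: "locally_integrable g" and C: "\<forall>x r. r > 0 \<longrightarrow>
        (LINT y:ball x r|lborel. \<bar>g y - poly_proj (deg_p p DIM('a)) (ball x r) g y\<bar>)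
          / orlicz_norm p (indicator (ball x r)) \<le> C"
        unfolding campanato_def by blast
      have big: "(LINT y:ball x r|lborel. \<bar>g y\<bar>) / orlicz_norm p (indicator (ball x r)) \<le> M / k"
        if "r > 0" "measure lborel (ball x r) \<ge> 1" for x :: 'a and r
        by (rule ratio_bound[OF lint_abs_nonneg proj_bound(1)[OF that(1) gm gb M] nrm[OF that(2)] kpos])
           (use that(2) in linarith)
      show "campanato_loc p g" unfolding campanato_loc_def
        using li C big by (intro conjI exI[of _ "max C (M / k)"]) (auto simp: le_max_iff_disj)
    next
      assume c: "campanato_loc p g"
      then obtain C where li: "locally_integrable g" and C: "\<forall>x r. r > 0 \<longrightarrow> measure lborel (ball x r) < 1 \<longrightarrow>
        (LINT y:ball x r|lborel. \<bar>g y - poly_proj (deg_p p DIM('a)) (ball x r) g y\<bar>)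
          / orlicz_norm p (indicator (ball x r)) \<le> C"
        unfolding campanato_loc_def by blast
      have big: "(LINT y:ball x r|lborel. \<bar>g y - poly_proj (deg_p p DIM('a)) (ball x r) g y\<bar>)
          / orlicz_norm p (indicator (ball x r)) \<le> 2 * M / k"
        if "r > 0" "measure lborel (ball x r) \<ge> 1" for x :: 'a and r
        by (rule ratio_bound[OF lint_abs_nonneg proj_bound(2)[OF that(1) gm gb M] nrm[OF that(2)] kpos])
           (use that(2) in linarith)
      have "\<forall>x r. r > 0 \<longrightarrow>
        (LINT y:ball x r|lborel. \<bar>g y - poly_proj (deg_p p DIM('a)) (ball x r) g y\<bar>)
          / orlicz_norm p (indicator (ball x r)) \<le> max C (2 * M / k)"
      proof (intro allI impI)
        fix x :: 'a and r :: real assume r: "r > 0"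
        show "(LINT y:ball x r|lborel. \<bar>g y - poly_proj (deg_p p DIM('a)) (ball x r) g y\<bar>)
          / orlicz_norm p (indicator (ball x r)) \<le> max C (2 * M / k)"
        proof (cases "measure lborel (ball x r) < 1")
          case True then show ?thesis using C r by (meson max.coboundedI1)
        next
          case False then show ?thesis using big[OF r] by (meson max.coboundedI2 not_less order.trans)
        qed
      qed
      then show "campanato p g" unfolding campanato_def using li by blast
    qed
  qed
  show ?thesis using eq by blast
qed

end
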